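(* Let $\gamma$ be a pure loxodromic isometry of $\mathbb{H}^4$ with axis $L$ and twisting plane $P$. Then a plane $Q\subset\mathbb{H}^4$ is orthogonal to both $P$ and $L$, with $Q$ meeting $P$ orthogonally through a line in $P$, if and only if $\partial Q\in\mathcal{K}_\gamma$.
   Context: A pure loxodromic isometry is a hyperbolic isometry $\gamma$ of $\mathbb{H}^4$, with axis $L$, that can be written as $\gamma=\delta\rho$. Here $\delta$ is a pure hyperbolic isometry (composition of reflections in two ultra-parallel hyperplanes) leaving $L$ invariant, and $\rho$ is a type-I elliptic isometry (composition of reflections in two hyperplanes meeting in a plane) whose fixed plane contains $L$. This fixed plane $P$ is the twisting plane of $\gamma$. The permuted pencil $\mathcal{F}_\gamma$ is the set of boundaries at infinity of the hyperplanes orthogonal to $L$. The twisting pencil $\mathcal{R}_\gamma$ is the set of boundaries of hyperplanes containing $P$. The half-turn bank is $\mathcal{K}_\gamma=\{s\cap t: s\in\mathcal{F}_\gamma,\ t\in\mathcal{R}_\gamma\}$. *)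

theory Defs
  imports "HOL-Analysis.Analysis"
begin

text \<open>Hyperboloid model of hyperbolic 4-space inside Minkowski space R^(4,1),
  realised as real^5 with coordinate 0 the time-like coordinate.\<close>

definition minner :: "real^5 \<Rightarrow> real^5 \<Rightarrow> real" where
  "minner x y = (\<Sum>i\<in>UNIV. x$i * y$i) - 2 * (x$0 * y$0)"

definition H4 :: "(real^5) set" where
  "H4 = {x. minner x x = -1 \<and> x$0 > 0}"

definition hyp_subspace :: "nat \<Rightarrow> (real^5) set \<Rightarrow> bool" where
  "hyp_subspace k S \<longleftrightarrow>
     (\<exists>V. subspace V \<and> dim V = Suc k \<and> S = V \<inter> H4) \<and> S \<noteq> {}"

abbreviation hyp_line :: "(real^5) set \<Rightarrow> bool" where
  "hyp_line \<equiv> hyp_subspace 1"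

abbreviation hyp_plane :: "(real^5) set \<Rightarrow> bool" where
  "hyp_plane \<equiv> hyp_subspace 2"

abbreviation hyp_hyperplane :: "(real^5) set \<Rightarrow> bool" where
  "hyp_hyperplane \<equiv> hyp_subspace 3"

definition tangent :: "(real^5) set \<Rightarrow> real^5 \<Rightarrow> (real^5) set" where
  "tangent S x = {v. v \<in> span S \<and> minner v x = 0}"

text \<open>Boundary at infinity: ideal points are the null vectors with time
  coordinate 1 (a model of the sphere at infinity S^3); the boundary of S is the
  set of ideal points in the closure of the projective (Klein) image of S.\<close>
definition bdry :: "(real^5) set \<Rightarrow> (real^5) set" where
  "bdry S = closure ((\<lambda>x. (1 / x$0) *\<^sub>R x) ` S) \<inter> {u. minner u u = 0}"

definition is_reflection :: "(real^5) set \<Rightarrow> (real^5 \<Rightarrow> real^5) \<Rightarrow> bool" where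
  "is_reflection S f \<longleftrightarrow> hyp_hyperplane S \<and>
     (\<exists>n. minner n n > 0 \<and> S = {x\<in>H4. minner x n = 0} \<and>
          f = (\<lambda>x. x - (2 * minner x n / minner n n) *\<^sub>R n))"

text \<open>Two hyperplanes are ultra-parallel if their closures in the compactified
  space are disjoint.\<close>
definition ultraparallel :: "(real^5) set \<Rightarrow> (real^5) set \<Rightarrow> bool" where
  "ultraparallel S T \<longleftrightarrow> hyp_hyperplane S \<and> hyp_hyperplane T \<and>
     S \<inter> T = {} \<and> bdry S \<inter> bdry T = {}"

definition pure_hyperbolic :: "(real^5 \<Rightarrow> real^5) \<Rightarrow> bool" where
  "pure_hyperbolic d \<longleftrightarrow> (\<exists>S T f g. ultraparallel S T \<and> is_reflection S f \<and>
     is_reflection T g \<and> d = f \<circ> g)"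

definition typeI_elliptic :: "(real^5 \<Rightarrow> real^5) \<Rightarrow> bool" where
  "typeI_elliptic r \<longleftrightarrow> (\<exists>S T f g. hyp_hyperplane S \<and> hyp_hyperplane T \<and>
     hyp_plane (S \<inter> T) \<and> is_reflection S f \<and> is_reflection T g \<and> r = f \<circ> g)"

definition fixed_set :: "(real^5 \<Rightarrow> real^5) \<Rightarrow> (real^5) set" where
  "fixed_set f = {x\<in>H4. f x = x}"

definition pure_loxodromic :: "(real^5 \<Rightarrow> real^5) \<Rightarrow> (real^5) set \<Rightarrow> (real^5) set \<Rightarrow> bool" where
  "pure_loxodromic g L P \<longleftrightarrow> hyp_line L \<and>
     (\<exists>d r. pure_hyperbolic d \<and> typeI_elliptic r \<and> g = d \<circ> r \<and>
        d ` L = L \<and> P = fixed_set r \<and> L \<subseteq> P)"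

text \<open>A and B meet orthogonally in a single point (used for line/plane and
  line/hyperplane orthogonality).\<close>
definition orth_at_point :: "(real^5) set \<Rightarrow> (real^5) set \<Rightarrow> bool" where
  "orth_at_point A B \<longleftrightarrow> (\<exists>x. A \<inter> B = {x} \<and>
     (\<forall>u\<in>tangent A x. \<forall>v\<in>tangent B x. minner u v = 0))"

text \<open>Q meets P orthogonally through a line: Q \<inter> P is a line, and the
  orthogonal complements of that line in Q and in P are orthogonal.\<close>
definition orth_along_line :: "(real^5) set \<Rightarrow> (real^5) set \<Rightarrow> bool" where
  "orth_along_line Q P \<longleftrightarrow> hyp_line (Q \<inter> P) \<and>
     (\<forall>x\<in>Q \<inter> P. \<forall>u\<in>tangent Q x. \<forall>v\<in>tangent P x.
        (\<forall>w\<in>tangent (Q \<inter> P) x. minner u w = 0) \<longrightarrow>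
        (\<forall>w\<in>tangent (Q \<inter> P) x. minner v w = 0) \<longrightarrow> minner u v = 0)"

definition permuted_pencil :: "(real^5) set \<Rightarrow> (real^5) set set" where
  "permuted_pencil L = {bdry S | S. hyp_hyperplane S \<and> orth_at_point S L}"

definition twisting_pencil :: "(real^5) set \<Rightarrow> (real^5) set set" where
  "twisting_pencil P = {bdry S | S. hyp_hyperplane S \<and> P \<subseteq> S}"

definition half_turn_bank :: "(real^5) set \<Rightarrow> (real^5) set \<Rightarrow> (real^5) set set" where
  "half_turn_bank L P = {s \<inter> t | s t. s \<in> permuted_pencil L \<and> t \<in> twisting_pencil P}"

end

theory Submission imports Defs begin

lemma exhaust_5: fixes x :: 5 shows "x = 0 \<or> x = 1 \<or> x = 2 \<or> x = 3 \<or> x = 4"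
proof (induct x)
  case (of_int z)
  then have "z = 0 \<or> z = 1 \<or> z = 2 \<or> z = 3 \<or> z = 4" by fastforce
  then show ?case by (elim disjE) simp_all
qed

lemma UNIV_5: "(UNIV :: 5 set) = {0,1,2,3,4}"
  using exhaust_5 by auto

lemma five_distinct: "(0::5) \<noteq> 1" "(0::5) \<noteq> 2" "(0::5) \<noteq> 3" "(0::5) \<noteq> 4" "(1::5) \<noteq> 2" "(1::5) \<noteq> 3" "(1::5) \<noteq> 4"
 "(2::5) \<noteq> 3" "(2::5) \<noteq> 4" "(3::5) \<noteq> 4" by simp_all

lemma minner_alt: "minner x y = x$1*y$1 + x$2*y$2 + x$3*y$3 + x$4*y$4 - x$0*y$0"
  unfolding minner_def UNIV_5 by (simp add: five_distinct)

lemma forall_5: "(\<forall>i::5. P i) \<longleftrightarrow> P 0 \<and> P 1 \<and> P 2 \<and> P 3 \<and> P 4"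
proof (rule iffI)
  assume h: "P 0 \<and> P 1 \<and> P 2 \<and> P 3 \<and> P 4"
  show "\<forall>i::5. P i"
  proof
    fix i :: 5
    show "P i" using exhaust_5[of i] h by (elim disjE) simp_all
  qed
qed simp

lemma vec5_eq: "(x::real^5) = y \<longleftrightarrow> x$0 = y$0 \<and> x$1 = y$1 \<and> x$2 = y$2 \<and> x$3 = y$3 \<and> x$4 = y$4"
  unfolding vec_eq_iff forall_5 ..

lemma minner_sym: "minner x y = minner y x" by (simp add: minner_alt algebra_simps)
lemma minner_add_left: "minner (x + y) z = minner x z + minner y z" by (simp add: minner_alt algebra_simps)
lemma minner_add_right: "minner z (x + y) = minner z x + minner z y" by (simp add: minner_alt algebra_simps)
lemma minner_diff_left: "minner (x - y) z = minner x z - minner y z" by (simp add: minner_alt algebra_simps)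
lemma minner_diff_right: "minner z (x - y) = minner z x - minner z y" by (simp add: minner_alt algebra_simps)
lemma minner_scaleR_left: "minner (c *\<^sub>R x) z = c * minner x z" by (simp add: minner_alt algebra_simps)
lemma minner_scaleR_right: "minner z (c *\<^sub>R x) = c * minner z x" by (simp add: minner_alt algebra_simps)
lemma minner_minus_left: "minner (- x) z = - minner x z" by (simp add: minner_alt algebra_simps)
lemma minner_minus_right: "minner z (- x) = - minner z x" by (simp add: minner_alt algebra_simps)
lemma minner_zero_left: "minner 0 z = 0" by (simp add: minner_alt)
lemma minner_zero_right: "minner z 0 = 0" by (simp add: minner_alt)

lemmas minner_simps = minner_add_left minner_add_right minner_diff_left minner_diff_right
  minner_scaleR_left minner_scaleR_right minner_minus_left minner_minus_right minner_zero_left minner_zero_right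

definition mJ :: "real^5 \<Rightarrow> real^5" where "mJ v = (\<chi> i. if i = 0 then - v$i else v$i)"

lemma minner_inner: "minner x y = inner x (mJ y)"
  unfolding minner_alt inner_vec_def UNIV_5 mJ_def by (simp add: five_distinct)

lemma mJ_mJ[simp]: "mJ (mJ v) = v" unfolding mJ_def by (simp add: vec_eq_iff)

lemma subspace_orth: "subspace {v. \<forall>a\<in>A. minner v a = 0}"
  unfolding subspace_def by (auto simp: minner_simps)

lemma subspace_orth1: "subspace {v. minner v a = 0}"
  unfolding subspace_def by (auto simp: minner_simps)

lemma dim_orth1: assumes "a \<noteq> 0" shows "dim {v. minner v a = 0} = 4"
proof -
  have "mJ 0 = 0" by (simp add: mJ_def vec_eq_iff)
  then have "mJ a \<noteq> 0" using assms by (metis mJ_mJ)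
  have "{v. minner v a = 0} = {v. mJ a \<bullet> v = 0}" by (auto simp: minner_inner inner_commute)
  moreover have "dim {v. mJ a \<bullet> v = 0} = DIM(real^5) - 1"
    by (rule dim_hyperplane) fact
  ultimately show ?thesis by simp
qed


lemma spacelike:
  assumes x: "x \<in> H4" and o: "minner e x = 0" and e: "e \<noteq> 0"
  shows "minner e e > 0"
proof -
  have h2: "x$0^2 = 1 + x$1^2 + x$2^2 + x$3^2 + x$4^2" and x0: "x$0 > 0"
    using x by (auto simp: H4_def minner_alt power2_eq_square)
  have h1: "x$0 * e$0 = x$1*e$1 + x$2*e$2 + x$3*e$3 + x$4*e$4"
    using o by (simp add: minner_alt algebra_simps)
  define S where "S = e$1^2 + e$2^2 + e$3^2 + e$4^2"
  define R where "R = (x$1*e$2 - x$2*e$1)^2 + (x$1*e$3 - x$3*e$1)^2 + (x$1*e$4 - x$4*e$1)^2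
     + (x$2*e$3 - x$3*e$2)^2 + (x$2*e$4 - x$4*e$2)^2 + (x$3*e$4 - x$4*e$3)^2"
  have "x$0^2 * minner e e = x$0^2 * S - (x$0 * e$0)^2"
    by (simp add: minner_alt S_def power2_eq_square algebra_simps)
  also have "\<dots> = S + R"
    unfolding h1 h2 S_def R_def by (simp add: power2_eq_square algebra_simps)
  finally have eq: "x$0^2 * minner e e = S + R" .
  have R0: "R \<ge> 0" unfolding R_def by simp
  show ?thesis
  proof (cases "S = 0")
    case True
    then have "e$1 = 0" "e$2 = 0" "e$3 = 0" "e$4 = 0" unfolding S_def
      by (smt (verit) power2_less_eq_zero_iff zero_le_power2)+
    with h1 x0 have "e$0 = 0" by simp
    with \<open>e$1 = 0\<close> \<open>e$2 = 0\<close> \<open>e$3 = 0\<close> \<open>e$4 = 0\<close> have "e = 0" by (simp add: vec5_eq)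
    with e show ?thesis by simp
  next
    case False
    have "S \<ge> 0" unfolding S_def by simp
    with False R0 eq have "x$0^2 * minner e e > 0" by simp
    moreover have "x$0^2 > 0" using x0 by simp
    ultimately show ?thesis by (simp add: zero_less_mult_iff)
  qed
qed

lemma time0_nonneg: "w$0 = 0 \<Longrightarrow> minner w w \<ge> 0"
proof -
  assume "w$0 = 0"
  then have "minner w w = (w$1)^2 + (w$2)^2 + (w$3)^2 + (w$4)^2" by (simp add: minner_alt power2_eq_square)
  then show ?thesis by simp
qed

lemma timelike_span:
  assumes V: "subspace V" and w: "w \<in> V" and neg: "minner w w < 0"
  shows "w \<in> span (V \<inter> H4)"
proof -
  have w0: "w$0 \<noteq> 0"
  proof
    assume "w$0 = 0"
    then have "minner w w \<ge> 0" by (rule time0_nonneg)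
    with neg show False by simp
  qed
  define c where "c = sqrt (- minner w w)"
  have c0: "c > 0" using neg by (simp add: c_def)
  have cc: "c * c = - minner w w" using neg by (simp add: c_def)
  define s :: real where "s = (if w$0 > 0 then 1 else -1)"
  have s2: "s * s = 1" by (simp add: s_def)
  define h where "h = (s / c) *\<^sub>R w"
  have "minner h h = (s/c) * (s/c) * minner w w" by (simp add: h_def minner_simps)
  also have "\<dots> = (s * s) * minner w w / (c * c)" by simp
  also have "\<dots> = -1" using s2 cc neg by simp
  finally have hh: "minner h h = -1" .
  have "h$0 = s * w$0 / c" by (simp add: h_def)
  moreover have "s * w$0 > 0" using w0 by (cases "w$0 > 0") (auto simp: s_def)
  ultimately have "h$0 > 0" using c0 by simp
  with hh have "h \<in> H4" by (simp add: H4_def)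
  moreover have "h \<in> V" using V w by (simp add: h_def subspace_scale)
  ultimately have "h \<in> span (V \<inter> H4)" by (simp add: span_base)
  then have "(s * c) *\<^sub>R h \<in> span (V \<inter> H4)" by (rule span_mul)
  moreover have "(s * c) *\<^sub>R h = ((s * s) * (c / c)) *\<^sub>R w" by (simp add: h_def)
  moreover have "(s * s) * (c / c) = 1" using s2 c0 by simp
  ultimately show ?thesis by simp
qed

lemma span_H4:
  assumes V: "subspace V" and p: "p \<in> V" "p \<in> H4"
  shows "span (V \<inter> H4) = V"
proof (rule span_subspace)
  show "V \<inter> H4 \<subseteq> V" by auto
  show "subspace V" by fact
  show "V \<subseteq> span (V \<inter> H4)"
  proof
    fix v assume v: "v \<in> V"
    define a where "a = minner p v"
    define b where "b = minner v v"
    define K where "K = 2 * \<bar>a\<bar> + \<bar>b\<bar> + 1"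
    have pp: "minner p p = -1" using p by (simp add: H4_def)
    have "minner (K *\<^sub>R p + v) (K *\<^sub>R p + v) = - (K*K) + 2*K*a + b"
      using pp by (simp add: minner_simps minner_sym[of v p] a_def b_def power2_eq_square algebra_simps)
    also have "\<dots> < 0"
    proof -
      have "K \<ge> 1" by (simp add: K_def)
      have "2*K*a \<le> K * (2*\<bar>a\<bar>)" using \<open>K \<ge> 1\<close> by (simp add: abs_le_iff mult_left_mono)
      moreover have "b \<le> K * \<bar>b\<bar>" using \<open>K \<ge> 1\<close>
        by (metis abs_ge_self abs_ge_zero dual_order.trans mult_1 mult_right_mono)
      ultimately have "- (K*K) + 2*K*a + b \<le> K * (- K + 2*\<bar>a\<bar> + \<bar>b\<bar>)"
        by (simp add: power2_eq_square algebra_simps)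
      also have "\<dots> = - K" by (simp add: K_def algebra_simps)
      finally show ?thesis using \<open>K \<ge> 1\<close> by simp
    qed
    finally have "K *\<^sub>R p + v \<in> span (V \<inter> H4)"
      by (intro timelike_span V) (auto intro: subspace_add subspace_scale V v p)
    moreover have "K *\<^sub>R p \<in> span (V \<inter> H4)" using p by (intro span_mul span_base) auto
    ultimately have "(K *\<^sub>R p + v) - K *\<^sub>R p \<in> span (V \<inter> H4)" by (rule span_diff)
    then show "v \<in> span (V \<inter> H4)" by simp
  qed
qed

lemma hs_span:
  assumes "hyp_subspace k S"
  shows "subspace (span S)" "dim (span S) = Suc k" "S = span S \<inter> H4" "S \<noteq> {}"
proof -
  obtain V where V: "subspace V" "dim V = Suc k" "S = V \<inter> H4" and ne: "S \<noteq> {}"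
    using assms by (auto simp: hyp_subspace_def)
  then obtain p where "p \<in> V" "p \<in> H4" by auto
  then have "span S = V" using span_H4 V by auto
  then show "subspace (span S)" "dim (span S) = Suc k" "S = span S \<inter> H4" "S \<noteq> {}" using V ne by auto
qed

lemma tangent_eq:
  assumes "subspace V" "S = V \<inter> H4" "x \<in> S"
  shows "tangent S x = {v \<in> V. minner v x = 0}"
  using span_H4[of V x] assms by (auto simp: tangent_def)

lemma H4_scale: assumes "x \<in> H4" "c *\<^sub>R x \<in> H4" shows "c = 1"
proof -
  have "c^2 * minner x x = -1" "minner x x = -1" "c * x$0 > 0" "x$0 > 0"
    using assms by (auto simp: H4_def minner_simps power2_eq_square)
  then have "c^2 = 1" "c > 0" by (auto simp: zero_less_mult_iff)
  then show ?thesis by (simp add: power2_eq_1_iff)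
qed

lemma span1_H4: assumes "x \<in> H4" shows "span {x} \<inter> H4 = {x}"
proof
  show "span {x} \<inter> H4 \<subseteq> {x}"
  proof
    fix y assume "y \<in> span {x} \<inter> H4"
    then obtain c where "y = c *\<^sub>R x" "c *\<^sub>R x \<in> H4" by (auto simp: span_singleton)
    moreover have "c = 1" using H4_scale[OF assms] \<open>c *\<^sub>R x \<in> H4\<close> by blast
    ultimately show "y \<in> {x}" by simp
  qed
  show "{x} \<subseteq> span {x} \<inter> H4" using assms by (auto intro: span_base)
qed


definition NV :: "(real^5) set \<Rightarrow> (real^5) set" where
  "NV V = {u. u \<in> V \<and> u$0 = 1 \<and> minner u u = 0}"

lemma null_time0: assumes "n$0 = 0" "minner n n = 0" shows "n = 0"
proof -
  have "minner n n = (n$1)^2 + (n$2)^2 + (n$3)^2 + (n$4)^2" using assms(1) by (simp add: minner_alt power2_eq_square)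
  then have "(n$1)^2 + (n$2)^2 + (n$3)^2 + (n$4)^2 = 0" using assms(2) by simp
  then have "n$1 = 0" "n$2 = 0" "n$3 = 0" "n$4 = 0"
    by (smt (verit) power2_less_eq_zero_iff zero_le_power2)+
  with assms(1) show ?thesis by (simp add: vec5_eq)
qed

lemma klein_surj:
  assumes V: "subspace V" and z: "z \<in> V" "z$0 = 1" "minner z z < 0"
  shows "z \<in> (\<lambda>x. (1 / x$0) *\<^sub>R x) ` (V \<inter> H4)"
proof -
  define c where "c = sqrt (- minner z z)"
  have c0: "c > 0" using z by (simp add: c_def)
  have cc: "c * c = - minner z z" using z by (simp add: c_def)
  define h where "h = (1 / c) *\<^sub>R z"
  have "minner h h = minner z z / (c * c)" by (simp add: h_def minner_simps)
  also have "\<dots> = minner z z / (- minner z z)" using cc by simp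
  also have "\<dots> = -1" using z(3) by simp
  finally have "minner h h = -1" .
  moreover have "h$0 = 1 / c" using z by (simp add: h_def)
  ultimately have hH: "h \<in> H4" using c0 by (simp add: H4_def)
  have "h \<in> V" using V z by (simp add: h_def subspace_scale)
  moreover have "(1 / h$0) *\<^sub>R h = z" using c0 \<open>h$0 = 1 / c\<close> by (simp add: h_def)
  ultimately show ?thesis using hH by (intro image_eqI[where x=h]) auto
qed

lemma bdry_eq:
  assumes V: "subspace V" and p: "p \<in> V" "p \<in> H4"
  shows "bdry (V \<inter> H4) = NV V"
proof
  let ?K = "(\<lambda>x. (1 / x$0) *\<^sub>R x) ` (V \<inter> H4)"
  have cl: "closed (V \<inter> {u. u$0 = 1})"
    by (intro closed_Int closed_subspace V closed_Collect_eq continuous_intros)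
  have "?K \<subseteq> V \<inter> {u. u$0 = 1}"
    using V by (auto simp: H4_def subspace_scale)
  then have "closure ?K \<subseteq> V \<inter> {u. u$0 = 1}" using cl by (rule closure_minimal)
  then show "bdry (V \<inter> H4) \<subseteq> NV V" by (auto simp: bdry_def NV_def)
  show "NV V \<subseteq> bdry (V \<inter> H4)"
  proof
    fix u assume "u \<in> NV V"
    then have u: "u \<in> V" "u$0 = 1" "minner u u = 0" by (auto simp: NV_def)
    define k where "k = (1 / p$0) *\<^sub>R p"
    have p0: "p$0 > 0" and pp: "minner p p = -1" using p by (auto simp: H4_def)
    have k: "k \<in> V" "k$0 = 1" using p0 V p by (auto simp: k_def subspace_scale)
    have B: "minner k k < 0"
    proof -
      have "minner k k = - (1 / p$0) * (1 / p$0)" by (simp add: k_def minner_simps pp)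
      also have "\<dots> < 0" using p0 by simp
      finally show ?thesis .
    qed
    define D where "D = k - u"
    have D0: "D$0 = 0" using k u by (simp add: D_def)
    have dd: "minner D D \<ge> 0" using time0_nonneg[OF D0] .
    have kud: "k = u + D" by (simp add: D_def)
    have Bexp: "minner k k = 2 * minner u D + minner D D"
      unfolding kud using u by (simp add: minner_simps minner_sym[of D u])
    have near: "u + t *\<^sub>R D \<in> ?K" if t: "0 < t" "t \<le> 1" for t
    proof (rule klein_surj[OF V])
      show "u + t *\<^sub>R D \<in> V" using u k V by (simp add: D_def subspace_add subspace_scale subspace_diff)
      show "(u + t *\<^sub>R D) $ 0 = 1" using u D0 by simp
      have "minner (u + t *\<^sub>R D) (u + t *\<^sub>R D) = 2 * t * minner u D + t * t * minner D D"
        using u by (simp add: minner_simps minner_sym[of D u] algebra_simps)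
      also have "\<dots> = t * minner k k - t * (1 - t) * minner D D"
        using Bexp by (simp add: algebra_simps)
      also have "\<dots> \<le> t * minner k k" using t dd by simp
      also have "\<dots> < 0" using t B by (simp add: mult_pos_neg)
      finally show "minner (u + t *\<^sub>R D) (u + t *\<^sub>R D) < 0" .
    qed
    have "u \<in> closure ?K"
      unfolding closure_approachable
    proof (intro allI impI)
      fix e :: real assume e: "e > 0"
      define t where "t = min 1 (e / (norm D + 1))"
      have nD: "norm D + 1 > 0" using norm_ge_zero[of D] by linarith
      have t: "0 < t" "t \<le> 1" using e nD by (auto simp: t_def)
      have "dist (u + t *\<^sub>R D) u = t * norm D" using t by (simp add: dist_norm)
      also have "\<dots> \<le> (e / (norm D + 1)) * norm D"
        by (intro mult_right_mono) (auto simp: t_def)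
      also have "\<dots> < e"
      proof -
        have "(e / (norm D + 1)) * norm D = e * (norm D / (norm D + 1))" by simp
        also have "\<dots> < e * 1"
          using e nD by (intro mult_strict_left_mono) (auto simp: divide_less_eq)
        finally show ?thesis by simp
      qed
      finally show "\<exists>y\<in>?K. dist y u < e" using near[OF t] by blast
    qed
    then show "u \<in> bdry (V \<inter> H4)" using u by (simp add: bdry_def)
  qed
qed

lemma null_in_span:
  assumes "n \<in> V" "minner n n = 0" "n \<noteq> 0" "subspace V"
  shows "n \<in> span (NV V)"
proof -
  have n0: "n$0 \<noteq> 0" using null_time0 assms by blast
  have "(1 / n$0) *\<^sub>R n \<in> NV V"
    using assms n0 by (simp add: NV_def minner_simps subspace_scale)
  then have "n$0 *\<^sub>R ((1 / n$0) *\<^sub>R n) \<in> span (NV V)" by (intro span_mul span_base)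
  then show ?thesis using n0 by simp
qed

lemma orth_decomp: assumes "p \<in> H4" shows "minner (v + minner v p *\<^sub>R p) p = 0"
  using assms by (simp add: H4_def minner_simps)

lemma span_NV:
  assumes V: "subspace V" and p: "p \<in> V" "p \<in> H4" and d: "dim V \<ge> 2"
  shows "span (NV V) = V"
proof (rule span_subspace)
  show "NV V \<subseteq> V" by (auto simp: NV_def)
  show "subspace V" by fact
  have pp: "minner p p = -1" using p by (simp add: H4_def)
  have key: "p \<in> span (NV V) \<and> w \<in> span (NV V)" if w: "w \<in> V" "minner w p = 0" "w \<noteq> 0" for w
  proof -
    have ww: "minner w w > 0" using spacelike[OF p(2) w(2) w(3)] .
    define k where "k = sqrt (minner w w)"
    have k0: "k > 0" and kk: "k * k = minner w w" using ww by (auto simp: k_def)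
    define a where "a = p + (1/k) *\<^sub>R w"
    define b where "b = p - (1/k) *\<^sub>R w"
    have wp: "minner p w = 0" using w by (simp add: minner_sym)
    have "minner a a = -1 + minner w w / (k * k)"
      by (simp add: a_def minner_simps pp wp w(2))
    then have aa: "minner a a = 0" using kk k0 ww by simp
    have "minner b b = -1 + minner w w / (k * k)"
      by (simp add: b_def minner_simps pp wp w(2))
    then have bb: "minner b b = 0" using kk k0 ww by simp
    have "minner p a = -1" "minner p b = -1" by (simp_all add: a_def b_def minner_simps pp wp)
    then have "a \<noteq> 0" "b \<noteq> 0" by (auto simp: minner_zero_right)
    have "a \<in> V" "b \<in> V" using V p w by (simp_all add: a_def b_def subspace_add subspace_diff subspace_scale)
    then have sa: "a \<in> span (NV V)" and sb: "b \<in> span (NV V)"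
      using null_in_span aa bb \<open>a \<noteq> 0\<close> \<open>b \<noteq> 0\<close> V by blast+
    have "(1/2) *\<^sub>R (a + b) \<in> span (NV V)" using sa sb by (intro span_mul span_add)
    moreover have "(1/2) *\<^sub>R (a + b) = p" by (simp add: a_def b_def scaleR_2[symmetric] del: scaleR_2)
    moreover have "(k/2) *\<^sub>R (a - b) \<in> span (NV V)" using sa sb by (intro span_mul span_diff)
    moreover have "(k/2) *\<^sub>R (a - b) = w" using k0
      by (simp add: a_def b_def scaleR_2[symmetric] del: scaleR_2)
    ultimately show ?thesis by simp
  qed
  have "\<not> V \<subseteq> span {p}"
  proof
    assume "V \<subseteq> span {p}"
    then have "dim V \<le> dim (span {p})" by (rule dim_subset)
    then have "dim V \<le> 1" using p by (auto simp: H4_def split: if_splits)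
    with d show False by simp
  qed
  then obtain v where v: "v \<in> V" "v \<notin> span {p}" by blast
  define w0 where "w0 = v + minner v p *\<^sub>R p"
  have "w0 \<noteq> 0"
  proof
    assume "w0 = 0"
    then have "v = (- minner v p) *\<^sub>R p" by (simp add: w0_def eq_neg_iff_add_eq_0)
    then have "v \<in> span {p}" by (metis span_base span_mul singletonI)
    with v show False by simp
  qed
  moreover have "w0 \<in> V" using V v p by (simp add: w0_def subspace_add subspace_scale)
  ultimately have pS: "p \<in> span (NV V)" using key orth_decomp[OF p(2)] w0_def by blast
  show "V \<subseteq> span (NV V)"
  proof
    fix y assume y: "y \<in> V"
    define w where "w = y + minner y p *\<^sub>R p"
    have "w \<in> V" using V y p by (simp add: w_def subspace_add subspace_scale)
    have "w \<in> span (NV V)"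
    proof (cases "w = 0")
      case True then show ?thesis by (simp add: span_zero)
    next
      case False then show ?thesis using key \<open>w \<in> V\<close> orth_decomp[OF p(2)] w_def by blast
    qed
    then have "w - minner y p *\<^sub>R p \<in> span (NV V)" using pS by (intro span_diff span_mul)
    then show "y \<in> span (NV V)" by (simp add: w_def)
  qed
qed


lemma exists_orth:
  assumes V: "subspace V" and p: "p \<in> V" "p \<in> H4" and d: "dim V \<ge> 2"
  obtains e where "e \<in> V" "minner e p = 0" "e \<noteq> 0"
proof -
  have "\<not> V \<subseteq> span {p}"
  proof
    assume "V \<subseteq> span {p}"
    then have "dim V \<le> dim (span {p})" by (rule dim_subset)
    then have "dim V \<le> 1" using p by (auto simp: H4_def split: if_splits)
    with d show False by simp
  qed
  then obtain v where v: "v \<in> V" "v \<notin> span {p}" by blast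
  define w0 where "w0 = v + minner v p *\<^sub>R p"
  have "w0 \<noteq> 0"
  proof
    assume "w0 = 0"
    then have "v = (- minner v p) *\<^sub>R p" by (simp add: w0_def eq_neg_iff_add_eq_0)
    then have "v \<in> span {p}" by (metis span_base span_mul singletonI)
    with v show False by simp
  qed
  moreover have "w0 \<in> V" using V v p by (simp add: w0_def subspace_add subspace_scale)
  moreover have "minner w0 p = 0" using orth_decomp[OF p(2)] by (simp add: w0_def)
  ultimately show ?thesis using that by blast
qed

lemma plane2_decomp:
  assumes V: "subspace V" "dim V = 2" and x: "x \<in> V" "x \<in> H4" and e: "e \<in> V" "minner e x = 0" "e \<noteq> 0"
    and v: "v \<in> V"
  obtains k c where "v = k *\<^sub>R x + c *\<^sub>R e"
proof -
  have xx: "minner x x = -1" using x by (simp add: H4_def)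
  have "x \<notin> span {e}"
  proof
    assume "x \<in> span {e}"
    then obtain c where "x = c *\<^sub>R e" by (auto simp: span_singleton)
    then have "minner x x = c * minner e x" by (simp add: minner_simps)
    with xx e show False by simp
  qed
  then have "dim {x, e} = 2" using e by (simp add: dim_insert)
  moreover have "span {x, e} \<subseteq> V" using V x e by (intro span_minimal) auto
  ultimately have "span {x, e} = V"
    using V by (intro subspace_dim_equal) auto
  with v have "v \<in> span (insert x {e})" by simp
  then obtain k where "v - k *\<^sub>R x \<in> span {e}" by (auto simp: span_insert)
  then obtain c where "v - k *\<^sub>R x = c *\<^sub>R e" by (auto simp: span_singleton)
  then have "v = k *\<^sub>R x + c *\<^sub>R e" by (simp add: algebra_simps)
  then show ?thesis by (rule that)
qed

lemma hyp_normal: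
  assumes "n \<noteq> 0" "p \<in> H4" "minner p n = 0"
  shows "hyp_hyperplane ({v. minner v n = 0} \<inter> H4)"
  unfolding hyp_subspace_def using assms subspace_orth1 dim_orth1[OF assms(1)] by auto

lemma fixed_refl:
  assumes f: "is_reflection S0 f" and g: "is_reflection T0 g" and pl: "hyp_plane (S0 \<inter> T0)"
  shows "fixed_set (f \<circ> g) = S0 \<inter> T0"
proof -
  obtain n1 where n1: "minner n1 n1 > 0" "S0 = {x\<in>H4. minner x n1 = 0}"
      "f = (\<lambda>x. x - (2 * minner x n1 / minner n1 n1) *\<^sub>R n1)" and hS: "hyp_hyperplane S0"
    using f by (auto simp: is_reflection_def)
  obtain n2 where n2: "minner n2 n2 > 0" "T0 = {x\<in>H4. minner x n2 = 0}"
      "g = (\<lambda>x. x - (2 * minner x n2 / minner n2 n2) *\<^sub>R n2)"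
    using g by (auto simp: is_reflection_def)
  have ST: "S0 \<noteq> T0"
  proof
    assume "S0 = T0"
    then have "S0 \<inter> T0 = S0" by simp
    then have "dim (span S0) = 3" using hs_span(2)[OF pl] by simp
    with hs_span(2)[OF hS] show False by simp
  qed
  show ?thesis
  proof
    show "S0 \<inter> T0 \<subseteq> fixed_set (f \<circ> g)"
      using n1 n2 by (auto simp: fixed_set_def)
    show "fixed_set (f \<circ> g) \<subseteq> S0 \<inter> T0"
    proof
      fix x assume "x \<in> fixed_set (f \<circ> g)"
      then have xH: "x \<in> H4" and fx: "f (g x) = x" by (auto simp: fixed_set_def)
      define a where "a = 2 * minner x n2 / minner n2 n2"
      define y where "y = x - a *\<^sub>R n2"
      define b where "b = 2 * minner y n1 / minner n1 n1"
      have gx: "g x = y" by (simp add: n2 y_def a_def)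
      have "f y = y - b *\<^sub>R n1" by (simp add: n1 b_def)
      with fx gx have eq: "a *\<^sub>R n2 + b *\<^sub>R n1 = 0" by (simp add: y_def algebra_simps)
      have n1z: "n1 \<noteq> 0" "n2 \<noteq> 0" using n1 n2 by (auto simp: minner_zero_left)
      have a0: "a = 0"
      proof (rule ccontr)
        assume "a \<noteq> 0"
        have "a *\<^sub>R n2 = - (b *\<^sub>R n1)" using eq by (simp add: eq_neg_iff_add_eq_0)
        then have "(1/a) *\<^sub>R (a *\<^sub>R n2) = (1/a) *\<^sub>R (- (b *\<^sub>R n1))" by simp
        then have n2e: "n2 = (- b / a) *\<^sub>R n1" using \<open>a \<noteq> 0\<close> by simp
        have "b \<noteq> 0" using n2e n1z by auto
        with \<open>a \<noteq> 0\<close> have c0: "- b / a \<noteq> 0" by simp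
        have "T0 = S0" unfolding n1 n2 n2e using c0 by (auto simp: minner_simps)
        with ST show False by simp
      qed
      with eq n1z have "b = 0" by simp
      with a0 have "minner x n2 = 0" "minner y n1 = 0" using n1 n2 by (auto simp: a_def b_def)
      moreover have "y = x" using a0 by (simp add: y_def)
      ultimately show "x \<in> S0 \<inter> T0" using xH n1 n2 by auto
    qed
  qed
qed

lemma lox_plane:
  assumes "pure_loxodromic g L P"
  shows "hyp_line L" "hyp_plane P" "L \<subseteq> P"
proof -
  obtain d r where r: "typeI_elliptic r" "P = fixed_set r" "L \<subseteq> P" and L: "hyp_line L"
    using assms by (auto simp: pure_loxodromic_def)
  obtain S0 T0 f g' where "hyp_plane (S0 \<inter> T0)" "is_reflection S0 f" "is_reflection T0 g'" "r = f \<circ> g'"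
    using r(1) by (auto simp: typeI_elliptic_def)
  then have "P = S0 \<inter> T0" using fixed_refl r(2) by simp
  then show "hyp_plane P" using \<open>hyp_plane (S0 \<inter> T0)\<close> by simp
  show "hyp_line L" "L \<subseteq> P" by fact+
qed


lemma NV_Int: "NV (A \<inter> B) = NV A \<inter> NV B" by (auto simp: NV_def)

lemma backward:
  assumes L: "hyp_line L" and P: "hyp_plane P" and LP: "L \<subseteq> P" and Q: "hyp_plane Q"
    and S: "hyp_hyperplane S" "orth_at_point S L" and T: "hyp_hyperplane T" "P \<subseteq> T"
    and B: "bdry Q = bdry S \<inter> bdry T"
  shows "orth_at_point Q L \<and> orth_along_line Q P"
proof -
  define VL where "VL = span L"
  define VP where "VP = span P"
  define VQ where "VQ = span Q"
  define VS where "VS = span S"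
  define VT where "VT = span T"
  note hL = hs_span[OF L, folded VL_def] and hP = hs_span[OF P, folded VP_def]
    and hQ = hs_span[OF Q, folded VQ_def] and hS = hs_span[OF S(1), folded VS_def]
    and hT = hs_span[OF T(1), folded VT_def]
  obtain x where SL: "S \<inter> L = {x}" and tSL: "\<forall>u\<in>tangent S x. \<forall>v\<in>tangent L x. minner u v = 0"
    using S(2) by (auto simp: orth_at_point_def)
  have xS: "x \<in> VS" "x \<in> H4" and xL: "x \<in> VL" using SL hS(3) hL(3) by blast+
  have VLP: "VL \<subseteq> VP" unfolding VL_def VP_def using LP by (rule span_mono)
  have VPT: "VP \<subseteq> VT" unfolding VT_def VP_def using T(2) by (rule span_mono)
  have xP: "x \<in> VP" "x \<in> VT" using xL VLP VPT by auto
  have subSL: "subspace (VS \<inter> VL)" using hS hL by (simp add: subspace_inter)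
  have SLeq: "(VS \<inter> VL) \<inter> H4 = {x}" using SL hS(3) hL(3) by blast
  have VSL: "VS \<inter> VL = span {x}"
    using span_H4[OF subSL, of x] xS xL SLeq by simp
  have dimx: "dim (span {x}) = 1" using xS by (auto simp: H4_def)
  have VLnS: "\<not> VL \<subseteq> VS"
  proof
    assume "VL \<subseteq> VS"
    then have "VS \<inter> VL = VL" by blast
    then show False using VSL dimx hL(2) by simp
  qed
  have bQ: "bdry Q = NV VQ" using bdry_eq[OF hQ(1)] hQ(3) hQ(4) by (metis all_not_in_conv IntE)
  have bS: "bdry S = NV VS" using bdry_eq[OF hS(1)] hS(3) xS by metis
  have bT: "bdry T = NV VT" using bdry_eq[OF hT(1)] hT(3) xP(2) xS(2) by metis
  have "NV VQ \<subseteq> VS \<inter> VT" using B bQ bS bT by (auto simp: NV_def)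
  moreover obtain q where q: "q \<in> VQ" "q \<in> H4" using hQ(3) hQ(4) by blast
  ultimately have VQsub: "VQ \<subseteq> VS \<inter> VT"
    using span_NV[OF hQ(1) q] hQ(2) span_minimal[of "NV VQ" "VS \<inter> VT"] hS(1) hT(1)
    by (simp add: subspace_inter)
  have "\<not> VS \<subseteq> VT"
  proof
    assume "VS \<subseteq> VT"
    then have "VS = VT" using hS hT by (intro subspace_dim_equal) auto
    then show False using VLnS VLP VPT by blast
  qed
  then have "VS \<inter> VT \<subset> VS" by blast
  moreover have "span (VS \<inter> VT) = VS \<inter> VT" using hS(1) hT(1) by (simp add: subspace_inter)
  moreover have "span VS = VS" using hS(1) by simp
  ultimately have "dim (VS \<inter> VT) < dim VS"
    by (metis dim_psubset)
  then have VQeq: "VQ = VS \<inter> VT"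
    using VQsub hQ hS hT by (intro subspace_dim_equal) (auto simp: subspace_inter)
  have QL: "Q \<inter> L = {x}" using SLeq VQeq hQ(3) hL(3) VLP VPT by blast
  have "tangent Q x \<subseteq> tangent S x"
    using VQeq by (auto simp: tangent_def VQ_def[symmetric] VS_def[symmetric])
  then have o1: "orth_at_point Q L" using QL tSL by (auto simp: orth_at_point_def)
  have subSP: "subspace (VS \<inter> VP)" using hS hP by (simp add: subspace_inter)
  have QP: "Q \<inter> P = (VS \<inter> VP) \<inter> H4" using VQeq hQ(3) hP(3) VPT by blast
  have xSP: "x \<in> VS \<inter> VP" using xS xP by simp
  have spQP: "span (Q \<inter> P) = VS \<inter> VP" using QP span_H4[OF subSP] xSP xS(2) by simp
  have "dim {a + b |a b. a \<in> VS \<and> b \<in> VP} + dim (VS \<inter> VP) = dim VS + dim VP"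
    using dim_sums_Int[OF hS(1) hP(1)] .
  moreover have "dim {a + b |a b. a \<in> VS \<and> b \<in> VP} \<le> 5"
    using dim_subset_UNIV[of "{a + b |a b. a \<in> VS \<and> b \<in> VP}"] by simp
  ultimately have d1: "dim (VS \<inter> VP) \<ge> 2" using hS(2) hP(2) by simp
  have "VS \<inter> VP \<subset> VP" using VLnS VLP by blast
  moreover have "span (VS \<inter> VP) = VS \<inter> VP" using subSP by simp
  moreover have "span VP = VP" using hP(1) by simp
  ultimately have "dim (VS \<inter> VP) < dim VP"
    by (metis dim_psubset)
  with d1 hP(2) have dSP: "dim (VS \<inter> VP) = 2" by simp
  have line: "hyp_line (Q \<inter> P)"
    unfolding hyp_subspace_def using subSP dSP QP xSP xS(2) by auto
  have "orth_along_line Q P"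
    unfolding orth_along_line_def
  proof (intro conjI line ballI impI)
    fix y u v
    assume y: "y \<in> Q \<inter> P" and u: "u \<in> tangent Q y" and v: "v \<in> tangent P y"
      and hu: "\<forall>w\<in>tangent (Q \<inter> P) y. minner u w = 0"
    have yH: "y \<in> H4" and ySP: "y \<in> VS \<inter> VP" using y QP by auto
    have uQ: "u \<in> VQ" "minner u y = 0" using u by (auto simp: tangent_def VQ_def)
    have vP: "v \<in> VP" using v by (auto simp: tangent_def VP_def)
    have uSP: "minner u w = 0" if w: "w \<in> VS \<inter> VP" for w
    proof -
      define w' where "w' = w + minner w y *\<^sub>R y"
      have "w' \<in> VS \<inter> VP" unfolding w'_def
        by (intro subspace_add[OF subSP] subspace_scale[OF subSP] w ySP)
      moreover have "minner w' y = 0" using orth_decomp[OF yH] by (simp add: w'_def)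
      ultimately have "w' \<in> tangent (Q \<inter> P) y" by (simp add: tangent_def spQP)
      then have "minner u w' = 0" using hu by blast
      then show ?thesis using uQ(2) by (simp add: w'_def minner_simps minner_sym[of y u])
    qed
    have ux: "minner u x = 0" using uSP xSP by blast
    have uS: "u \<in> VS" using uQ VQeq by blast
    have utS: "u \<in> tangent S x" using uS ux by (simp add: tangent_def VS_def)
    have uL: "minner u b = 0" if b: "b \<in> VL" for b
    proof -
      define b' where "b' = b + minner b x *\<^sub>R x"
      have "b' \<in> VL" using b xL hL(1) by (simp add: b'_def subspace_add subspace_scale)
      moreover have "minner b' x = 0" using orth_decomp[OF xS(2)] by (simp add: b'_def)
      ultimately have "b' \<in> tangent L x" by (simp add: tangent_def VL_def)
      then have "minner u b' = 0" using tSL utS by blast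
      then show ?thesis using ux by (simp add: b'_def minner_simps)
    qed
    define W where "W = {a + b |a b. a \<in> VS \<inter> VP \<and> b \<in> VL}"
    have subW: "subspace W" unfolding W_def using subSP hL(1) by (rule subspace_sums)
    have "dim W + dim ((VS \<inter> VP) \<inter> VL) = dim (VS \<inter> VP) + dim VL"
      unfolding W_def using dim_sums_Int[OF subSP hL(1)] .
    moreover have "(VS \<inter> VP) \<inter> VL = span {x}" using VSL VLP by blast
    ultimately have "dim W = 3" using dSP hL(2) dimx by simp
    moreover have "W \<subseteq> VP" unfolding W_def using VLP hP(1) by (auto intro: subspace_add)
    ultimately have "W = VP" using subW hP by (intro subspace_dim_equal) auto
    with vP obtain a b where "v = a + b" "a \<in> VS \<inter> VP" "b \<in> VL" unfolding W_def by blast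
    then show "minner u v = 0" using uSP uL by (simp add: minner_simps)
  qed
  with o1 show ?thesis by simp
qed


lemma forward:
  assumes L: "hyp_line L" and P: "hyp_plane P" and LP: "L \<subseteq> P" and Q: "hyp_plane Q"
    and oQL: "orth_at_point Q L" and oQP: "orth_along_line Q P"
  shows "\<exists>S T. hyp_hyperplane S \<and> orth_at_point S L \<and> hyp_hyperplane T \<and> P \<subseteq> T
           \<and> bdry Q = bdry S \<inter> bdry T"
proof -
  define VL where "VL = span L"
  define VP where "VP = span P"
  define VQ where "VQ = span Q"
  note hL = hs_span[OF L, folded VL_def] and hP = hs_span[OF P, folded VP_def]
    and hQ = hs_span[OF Q, folded VQ_def]
  obtain x where QL: "Q \<inter> L = {x}" and tQL: "\<forall>u\<in>tangent Q x. \<forall>v\<in>tangent L x. minner u v = 0"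
    using oQL by (auto simp: orth_at_point_def)
  have xQ: "x \<in> VQ" "x \<in> H4" and xL: "x \<in> VL" using QL hQ(3) hL(3) by blast+
  have VLP: "VL \<subseteq> VP" unfolding VL_def VP_def using LP by (rule span_mono)
  have xP: "x \<in> VP" using xL VLP by auto
  have dL2: "dim VL = 2" using hL(2) by simp
  obtain e where e: "e \<in> VL" "minner e x = 0" "e \<noteq> 0"
    using exists_orth[OF hL(1) xL xQ(2)] hL(2) by auto
  have ex: "minner x e = 0" using e by (simp add: minner_sym)
  define VS where "VS = {v. minner v e = 0}"
  have subS: "subspace VS" unfolding VS_def by (rule subspace_orth1)
  have dS: "dim VS = 4" unfolding VS_def using e(3) by (rule dim_orth1)
  have xS: "x \<in> VS" using ex by (simp add: VS_def)
  define S where "S = VS \<inter> H4"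
  have hypS: "hyp_hyperplane S" unfolding S_def VS_def using hyp_normal[OF e(3) xQ(2) ex] .
  have tQ: "tangent Q x = {v \<in> VQ. minner v x = 0}" using tangent_eq[OF hQ(1) hQ(3)] QL by blast
  have tL: "tangent L x = {v \<in> VL. minner v x = 0}" using tangent_eq[OF hL(1) hL(3)] QL by blast
  have tS: "tangent S x = {v \<in> VS. minner v x = 0}" using tangent_eq[OF subS S_def] xS xQ(2) by (simp add: S_def)
  have VQS: "VQ \<subseteq> VS"
  proof
    fix u assume u: "u \<in> VQ"
    define u' where "u' = u + minner u x *\<^sub>R x"
    have "u' \<in> tangent Q x" using u xQ hQ(1) orth_decomp[OF xQ(2)]
      by (simp add: tQ u'_def subspace_add subspace_scale)
    moreover have "e \<in> tangent L x" using e tL by simp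
    ultimately have "minner u' e = 0" using tQL by blast
    then show "u \<in> VS" using ex by (simp add: VS_def u'_def minner_simps)
  qed
  have SL: "S \<inter> L = {x}"
  proof
    show "{x} \<subseteq> S \<inter> L" using xS xQ(2) QL by (auto simp: S_def)
    show "S \<inter> L \<subseteq> {x}"
    proof
      fix y assume y: "y \<in> S \<inter> L"
      then have yL: "y \<in> VL" and yH: "y \<in> H4" and ye: "minner y e = 0"
        using hL(3) by (auto simp: S_def VS_def)
      obtain k c where yd: "y = k *\<^sub>R x + c *\<^sub>R e"
        using plane2_decomp[OF hL(1) dL2 xL xQ(2) e yL] .
      have "minner y e = c * minner e e" using ex by (simp add: yd minner_simps)
      moreover have "minner e e > 0" using spacelike[OF xQ(2) e(2) e(3)] .
      ultimately have "c = 0" using ye by simp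
      then have "k *\<^sub>R x \<in> H4" using yH yd by simp
      then have "k = 1" using H4_scale[OF xQ(2)] by blast
      then show "y \<in> {x}" using yd \<open>c = 0\<close> by simp
    qed
  qed
  have oSL: "orth_at_point S L"
    unfolding orth_at_point_def
  proof (intro exI conjI ballI)
    show "S \<inter> L = {x}" by (rule SL)
    fix u v assume u: "u \<in> tangent S x" and v: "v \<in> tangent L x"
    then have vL: "v \<in> VL" "minner v x = 0" and ue: "minner u e = 0" using tL tS by (auto simp: VS_def)
    obtain k c where vd: "v = k *\<^sub>R x + c *\<^sub>R e"
      using plane2_decomp[OF hL(1) dL2 xL xQ(2) e vL(1)] .
    have xx: "minner x x = -1" using xQ(2) by (simp add: H4_def)
    have "minner v x = - k" using e(2) xx by (simp add: vd minner_simps)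
    then have "k = 0" using vL(2) by simp
    then show "minner u v = 0" using ue by (simp add: vd minner_simps)
  qed
  have line: "hyp_line (Q \<inter> P)" using oQP by (simp add: orth_along_line_def)
  have subQP: "subspace (VQ \<inter> VP)" using hQ hP by (simp add: subspace_inter)
  have QP: "Q \<inter> P = (VQ \<inter> VP) \<inter> H4" using hQ(3) hP(3) by blast
  have "span (Q \<inter> P) = VQ \<inter> VP" using QP span_H4[OF subQP, of x] xQ xP by simp
  then have dQP: "dim (VQ \<inter> VP) = 2" using hs_span(2)[OF line] by simp
  define W where "W = {a + b |a b. a \<in> VQ \<and> b \<in> VP}"
  have "dim W + dim (VQ \<inter> VP) = dim VQ + dim VP" unfolding W_def using dim_sums_Int[OF hQ(1) hP(1)] .
  then have "dim W = 4" using dQP hQ(2) hP(2) by simp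
  then have "dim W < DIM(real^5)" by simp
  then obtain a where a: "a \<noteq> 0" "\<And>y. y \<in> span W \<Longrightarrow> orthogonal a y"
    using orthogonal_to_subspace_exists[of W] by blast
  define m where "m = mJ a"
  have "mJ 0 = 0" by (simp add: mJ_def vec_eq_iff)
  then have m0: "m \<noteq> 0" using a(1) by (metis mJ_mJ m_def)
  have mW: "minner y m = 0" if "y \<in> W" for y
  proof -
    have "orthogonal a y" using a(2) that by (simp add: span_base)
    then show ?thesis by (simp add: minner_inner m_def orthogonal_def inner_commute)
  qed
  have QW: "VQ \<subseteq> W" unfolding W_def using hP(1) by (force intro: subspace_0)
  have PW: "VP \<subseteq> W" unfolding W_def using hQ(1)
    by clarsimp (metis add_0 subspace_0)
  define VT where "VT = {v. minner v m = 0}"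
  have subT: "subspace VT" unfolding VT_def by (rule subspace_orth1)
  have xm: "minner x m = 0" using mW PW xP by blast
  define T where "T = VT \<inter> H4"
  have hypT: "hyp_hyperplane T" unfolding T_def VT_def using hyp_normal[OF m0 xQ(2) xm] .
  have PT: "P \<subseteq> T" using PW mW hP(3) by (auto simp: T_def VT_def)
  have VQT: "VQ \<subseteq> VT" using QW mW by (auto simp: VT_def)
  have mx: "minner m x = 0" using xm by (simp add: minner_sym)
  have mm: "minner m m > 0" using spacelike[OF xQ(2) mx m0] .
  have "minner e m = 0" using mW PW VLP e(1) by blast
  then have "m \<in> VS" by (simp add: VS_def minner_sym)
  moreover have "m \<notin> VT" using mm by (simp add: VT_def)
  ultimately have "VS \<inter> VT \<subset> VS" by blast
  moreover have "span (VS \<inter> VT) = VS \<inter> VT" using subS subT by (simp add: subspace_inter)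
  moreover have "span VS = VS" using subS by simp
  ultimately have "dim (VS \<inter> VT) < dim VS" by (metis dim_psubset)
  then have VQeq: "VQ = VS \<inter> VT"
    using VQS VQT hQ(1,2) dS subS subT by (intro subspace_dim_equal) (auto simp: subspace_inter)
  have bQ: "bdry Q = NV VQ" using bdry_eq[OF hQ(1) xQ(1) xQ(2)] hQ(3) by simp
  have bS: "bdry S = NV VS" using bdry_eq[OF subS xS xQ(2)] by (simp add: S_def)
  have xT: "x \<in> VT" using xm by (simp add: VT_def)
  have bT: "bdry T = NV VT" using bdry_eq[OF subT xT xQ(2)] by (simp add: T_def)
  have "bdry Q = bdry S \<inter> bdry T" using bQ bS bT VQeq NV_Int by simp
  then show ?thesis using hypS oSL hypT PT by blast
qed

theorem theorem5p9:
  fixes g :: "real^5 \<Rightarrow> real^5" and L P Q :: "(real^5) set"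
  assumes "pure_loxodromic g L P"
    and "hyp_plane Q"
  shows "(orth_at_point Q L \<and> orth_along_line Q P) \<longleftrightarrow> bdry Q \<in> half_turn_bank L P"
proof -
  note lp = lox_plane[OF assms(1)]
  show ?thesis
  proof
    assume "orth_at_point Q L \<and> orth_along_line Q P"
    then obtain S T where "hyp_hyperplane S" "orth_at_point S L" "hyp_hyperplane T" "P \<subseteq> T"
        "bdry Q = bdry S \<inter> bdry T"
      using forward[OF lp assms(2)] by blast
    then show "bdry Q \<in> half_turn_bank L P"
      unfolding half_turn_bank_def permuted_pencil_def twisting_pencil_def by blast
  next
    assume "bdry Q \<in> half_turn_bank L P"
    then obtain S T where "hyp_hyperplane S" "orth_at_point S L" "hyp_hyperplane T" "P \<subseteq> T"
        "bdry Q = bdry S \<inter> bdry T"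
      unfolding half_turn_bank_def permuted_pencil_def twisting_pencil_def by blast
    then show "orth_at_point Q L \<and> orth_along_line Q P"
      using backward[OF lp assms(2)] by blast
  qed
qed

end
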